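(* Let $\mathfrak g$ be a finite-dimensional complex simple Lie algebra, $\lambda\in P^+$, $i\in I$ and $w\in W$ such that $\lambda-w^{-1}\omega_i\in P^+$. Then $(\lambda,\lambda)$ is maximal in $P^+(2\lambda,2)/\!\sim$ and $(\lambda,\lambda-w^{-1}\omega_i)$ is maximal in $P^+(2\lambda-w^{-1}\omega_i,2)/\!\sim$; that is, if $\boldsymbol\mu\in P^+(2\lambda,2)$ with $(\lambda,\lambda)\preceq\boldsymbol\mu$ then $\boldsymbol\mu\sim(\lambda,\lambda)$, and if $\boldsymbol\mu\in P^+(2\lambda-w^{-1}\omega_i,2)$ with $(\lambda,\lambda-w^{-1}\omega_i)\preceq\boldsymbol\mu$ then $\boldsymbol\mu\sim(\lambda,\lambda-w^{-1}\omega_i)$.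
   Context: $\mathfrak g$ has simple roots indexed by $I$, fundamental weights $\omega_i$, positive roots $R^+$, coroots $h_\alpha$, Weyl group $W$, dominant integral weights $P^+$. For $\lambda\in P^+$, $P^+(\lambda,2)=\{(\lambda_1,\lambda_2)\in(P^+)^2:\lambda_1+\lambda_2=\lambda\}$; $(\lambda_1,\lambda_2)\preceq(\mu_1,\mu_2)$ means $\min\{\lambda_1(h_\alpha),\lambda_2(h_\alpha)\}\le\min\{\mu_1(h_\alpha),\mu_2(h_\alpha)\}$ for all $\alpha\in R^+$, and $\sim$ means equality of these minima for all $\alpha\in R^+$. *)

theory Defs
  imports "HOL-Analysis.Analysis"
begin

text \<open>Root data of a finite-dimensional complex simple Lie algebra, modelled by its
(reduced, crystallographic, irreducible) root system in a real Euclidean space.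
The pairing lambda(h_alpha) is 2 (lambda, alpha) / (alpha, alpha).\<close>

definition cpair :: "'a::euclidean_space \<Rightarrow> 'a \<Rightarrow> real" where
  "cpair lam \<alpha> = 2 * (lam \<bullet> \<alpha>) / (\<alpha> \<bullet> \<alpha>)"

definition refl :: "'a::euclidean_space \<Rightarrow> 'a \<Rightarrow> 'a" where
  "refl \<alpha> x = x - cpair x \<alpha> *\<^sub>R \<alpha>"

definition root_system :: "'a::euclidean_space set \<Rightarrow> bool" where
  "root_system R \<longleftrightarrow> finite R \<and> 0 \<notin> R \<and> span R = UNIV \<and>
     (\<forall>\<alpha>\<in>R. refl \<alpha> ` R = R) \<and>
     (\<forall>\<alpha>\<in>R. \<forall>\<beta>\<in>R. cpair \<beta> \<alpha> \<in> \<int>) \<and>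
     (\<forall>\<alpha>\<in>R. \<forall>c::real. c *\<^sub>R \<alpha> \<in> R \<longrightarrow> c = 1 \<or> c = -1)"

definition irreducible_rs :: "'a::euclidean_space set \<Rightarrow> bool" where
  "irreducible_rs R \<longleftrightarrow> R \<noteq> {} \<and> \<not> (\<exists>A B. A \<noteq> {} \<and> B \<noteq> {} \<and> A \<union> B = R \<and> A \<inter> B = {} \<and>
        (\<forall>\<alpha>\<in>A. \<forall>\<beta>\<in>B. \<alpha> \<bullet> \<beta> = 0))"

text \<open>A base (set of simple roots, indexing set I).\<close>
definition is_base :: "'a::euclidean_space set \<Rightarrow> 'a set \<Rightarrow> bool" where
  "is_base R S \<longleftrightarrow> S \<subseteq> R \<and> independent S \<and>
     (\<forall>\<beta>\<in>R. \<exists>c :: 'a \<Rightarrow> int. \<beta> = (\<Sum>\<alpha>\<in>S. of_int (c \<alpha>) *\<^sub>R \<alpha>) \<and>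
          ((\<forall>\<alpha>\<in>S. c \<alpha> \<ge> 0) \<or> (\<forall>\<alpha>\<in>S. c \<alpha> \<le> 0)))"

definition pos_roots :: "'a::euclidean_space set \<Rightarrow> 'a set \<Rightarrow> 'a set" where
  "pos_roots R S = {\<beta>\<in>R. \<exists>c :: 'a \<Rightarrow> int. \<beta> = (\<Sum>\<alpha>\<in>S. of_int (c \<alpha>) *\<^sub>R \<alpha>) \<and> (\<forall>\<alpha>\<in>S. c \<alpha> \<ge> 0)}"

definition fund_wt :: "'a::euclidean_space set \<Rightarrow> 'a \<Rightarrow> 'a" where
  "fund_wt S i = (THE \<omega>. \<forall>j\<in>S. cpair \<omega> j = (if j = i then 1 else 0))"

definition weights :: "'a::euclidean_space set \<Rightarrow> 'a set" where
  "weights R = {lam. \<forall>\<alpha>\<in>R. cpair lam \<alpha> \<in> \<int>}"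

definition dominant :: "'a::euclidean_space set \<Rightarrow> 'a set \<Rightarrow> 'a set" where
  "dominant R S = {lam \<in> weights R. \<forall>\<alpha>\<in>S. cpair lam \<alpha> \<ge> 0}"

inductive_set weyl :: "'a::euclidean_space set \<Rightarrow> ('a \<Rightarrow> 'a) set" for R where
  weyl_id: "id \<in> weyl R"
| weyl_step: "w \<in> weyl R \<Longrightarrow> \<alpha> \<in> R \<Longrightarrow> refl \<alpha> \<circ> w \<in> weyl R"

definition Pplus2 :: "'a::euclidean_space set \<Rightarrow> 'a set \<Rightarrow> 'a \<Rightarrow> ('a \<times> 'a) set" where
  "Pplus2 R S lam = {(l1, l2). l1 \<in> dominant R S \<and> l2 \<in> dominant R S \<and> l1 + l2 = lam}"

definition minpair :: "'a::euclidean_space \<times> 'a \<Rightarrow> 'a \<Rightarrow> real" where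
  "minpair p \<alpha> = min (cpair (fst p) \<alpha>) (cpair (snd p) \<alpha>)"

definition preceq :: "'a::euclidean_space set \<Rightarrow> 'a set \<Rightarrow> 'a \<times> 'a \<Rightarrow> 'a \<times> 'a \<Rightarrow> bool" where
  "preceq R S p q \<longleftrightarrow> (\<forall>\<alpha>\<in>pos_roots R S. minpair p \<alpha> \<le> minpair q \<alpha>)"

definition simeq :: "'a::euclidean_space set \<Rightarrow> 'a set \<Rightarrow> 'a \<times> 'a \<Rightarrow> 'a \<times> 'a \<Rightarrow> bool" where
  "simeq R S p q \<longleftrightarrow> (\<forall>\<alpha>\<in>pos_roots R S. minpair p \<alpha> = minpair q \<alpha>)"

end

theory Submission
  imports Defs
begin

lemma cpair_add: "cpair (a + b) \<alpha> = cpair a \<alpha> + cpair b \<alpha>"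
  by (simp add: cpair_def inner_add_left add_divide_distrib distrib_left)
lemma cpair_diff: "cpair (a - b) \<alpha> = cpair a \<alpha> - cpair b \<alpha>"
  by (simp add: cpair_def inner_diff_left diff_divide_distrib right_diff_distrib)
lemma cpair_scale: "cpair (c *\<^sub>R a) \<alpha> = c * cpair a \<alpha>"
  by (simp add: cpair_def)
lemma cpair_neg: "cpair a (- \<alpha>) = - cpair a \<alpha>"
  by (simp add: cpair_def)

lemma refl_inner:
  assumes "(\<alpha>::'a::euclidean_space) \<noteq> 0"
  shows "refl \<alpha> x \<bullet> refl \<alpha> y = x \<bullet> y"
proof -
  have N: "\<alpha> \<bullet> \<alpha> \<noteq> 0" using assms by simp
  show ?thesis using N
    by (simp add: refl_def cpair_def inner_diff_left inner_diff_right inner_commute field_simps)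
qed

lemma refl_linear: "linear (refl (\<alpha>::'a::euclidean_space))"
  by (rule linearI) (simp_all add: refl_def cpair_add cpair_scale algebra_simps)

lemma weyl_props:
  assumes "root_system R" "w \<in> weyl R"
  shows "linear w \<and> (\<forall>a b. w a \<bullet> w b = a \<bullet> b) \<and> w ` R = R"
  using assms(2)
proof induction
  case weyl_id
  have "linear (id::'a\<Rightarrow>'a)" by (rule linearI) simp_all
  then show ?case unfolding id_def by simp
next
  case (weyl_step w \<alpha>)
  have "\<alpha> \<noteq> 0" using assms(1) weyl_step(2) unfolding root_system_def by auto
  moreover have "refl \<alpha> ` R = R" using assms(1) weyl_step(2) unfolding root_system_def by auto
  moreover have "linear (refl \<alpha> \<circ> w)"
    using linear_compose[of w "refl \<alpha>"] weyl_step(3) refl_linear[of \<alpha>] by blast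
  moreover have "(refl \<alpha> \<circ> w) ` R = R" using weyl_step(3) \<open>refl \<alpha> ` R = R\<close>
    by (simp only: image_comp[symmetric])
  ultimately show ?case
  proof (intro conjI allI)
    fix a b show "(refl \<alpha> \<circ> w) a \<bullet> (refl \<alpha> \<circ> w) b = a \<bullet> b"
      using weyl_step(3) \<open>\<alpha> \<noteq> 0\<close> by (simp add: refl_inner)
  qed (simp_all only:)
qed

lemma base_span:
  assumes "root_system R" "is_base R S"
  shows "span S = UNIV"
proof -
  have "R \<subseteq> span S"
  proof
    fix \<beta> assume "\<beta> \<in> R"
    then obtain c :: "'a \<Rightarrow> int" where "\<beta> = (\<Sum>\<alpha>\<in>S. of_int (c \<alpha>) *\<^sub>R \<alpha>)"
      using assms(2) unfolding is_base_def by blast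
    then show "\<beta> \<in> span S" by (simp only:) (intro span_sum span_scale span_base)
  qed
  then have "span R \<subseteq> span S" by (simp add: span_minimal)
  then show ?thesis using assms(1) unfolding root_system_def by auto
qed

lemma zero_by_span:
  assumes "span S = UNIV" "\<forall>j\<in>S. (v::'a::euclidean_space) \<bullet> j = 0"
  shows "v = 0"
proof -
  have "orthogonal v v"
    by (rule orthogonal_to_span) (use assms in \<open>auto simp: orthogonal_def\<close>)
  then show ?thesis by (simp add: orthogonal_def)
qed

lemma cpair_zero_by_span:
  assumes "span S = UNIV" "\<forall>j\<in>S. cpair (v::'a::euclidean_space) j = 0"
  shows "v = 0"
  using assms by (intro zero_by_span[OF assms(1)]) (auto simp: cpair_def)

lemma fund_wt_prop:
  assumes "root_system R" "is_base R S"
  shows "\<forall>j\<in>S. cpair (fund_wt S i) j = (if j = i then 1 else 0)"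
proof -
  have sp: "span S = UNIV" by (rule base_span[OF assms])
  have nz: "\<forall>j\<in>S. j \<bullet> j \<noteq> 0" using assms unfolding root_system_def is_base_def by auto
  have ind: "independent S" using assms(2) unfolding is_base_def by auto
  obtain g :: "'a \<Rightarrow> real" where g: "linear g"
    "\<forall>x\<in>S. g x = (if x = i then (x \<bullet> x) / 2 else 0)"
    using linear_independent_extend[OF ind, of "\<lambda>x. if x = i then (x \<bullet> x) / 2 else (0::real)"]
    by auto
  define \<omega> where "\<omega> = adjoint g 1"
  have om: "\<And>x. x \<bullet> \<omega> = g x" unfolding \<omega>_def using adjoint_works[OF g(1)] by simp
  have P: "\<forall>j\<in>S. cpair \<omega> j = (if j = i then 1 else 0)"
  proof
    fix j assume j: "j \<in> S"
    have "cpair \<omega> j = 2 * g j / (j \<bullet> j)" unfolding cpair_def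
      by (simp only: inner_commute[of \<omega> j] om)
    also have "\<dots> = (if j = i then 1 else 0)" using j nz g(2) by auto
    finally show "cpair \<omega> j = (if j = i then 1 else 0)" .
  qed
  have U: "\<And>\<omega>'. \<forall>j\<in>S. cpair \<omega>' j = (if j = i then 1 else 0) \<Longrightarrow> \<omega>' = \<omega>"
  proof -
    fix \<omega>' assume "\<forall>j\<in>S. cpair \<omega>' j = (if j = i then 1 else 0)"
    then have "\<forall>j\<in>S. cpair (\<omega>' - \<omega>) j = 0" using P by (simp add: cpair_diff)
    then show "\<omega>' = \<omega>" using cpair_zero_by_span[OF sp, of "\<omega>' - \<omega>"] by simp
  qed
  have "fund_wt S i = \<omega>" unfolding fund_wt_def
    by (rule the_equality) (rule P, erule U)
  then show ?thesis using P by simp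
qed

lemma neg_root:
  assumes "root_system R" "\<gamma> \<in> R"
  shows "- \<gamma> \<in> R"
proof -
  have "\<gamma> \<noteq> 0" "refl \<gamma> ` R = R" using assms unfolding root_system_def by auto
  moreover have "refl \<gamma> \<gamma> = - \<gamma>" using \<open>\<gamma> \<noteq> 0\<close>
    by (simp add: refl_def cpair_def algebra_simps scaleR_2)
  ultimately show ?thesis using assms(2) by (metis imageI)
qed

lemma pos_or_neg:
  assumes "root_system R" "is_base R S" "\<gamma> \<in> R"
  shows "\<gamma> \<in> pos_roots R S \<or> - \<gamma> \<in> pos_roots R S"
proof -
  obtain c :: "'a \<Rightarrow> int" where c: "\<gamma> = (\<Sum>\<alpha>\<in>S. of_int (c \<alpha>) *\<^sub>R \<alpha>)"
    "(\<forall>\<alpha>\<in>S. c \<alpha> \<ge> 0) \<or> (\<forall>\<alpha>\<in>S. c \<alpha> \<le> 0)"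
    using assms(2,3) unfolding is_base_def by blast
  show ?thesis
  proof (cases "\<forall>\<alpha>\<in>S. c \<alpha> \<ge> 0")
    case True
    then show ?thesis using c assms(3) unfolding pos_roots_def by blast
  next
    case False
    then have "\<forall>\<alpha>\<in>S. - c \<alpha> \<ge> 0" using c(2) by auto
    moreover have "- \<gamma> = (\<Sum>\<alpha>\<in>S. of_int (- c \<alpha>) *\<^sub>R \<alpha>)"
      using c(1) by (simp add: sum_negf[symmetric])
    moreover have "- \<gamma> \<in> R" using neg_root[OF assms(1,3)] .
    ultimately have "- \<gamma> \<in> pos_roots R S" unfolding pos_roots_def
      by (auto intro!: exI[of _ "\<lambda>a. - c a"])
    then show ?thesis ..
  qed
qed

lemma Ints_01: "(t::real) \<in> \<int> \<Longrightarrow> 0 \<le> t \<Longrightarrow> t \<le> 1 \<Longrightarrow> t = 0 \<or> t = 1"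
  by (metis Ints_cases of_int_0_le_iff of_int_le_1_iff of_int_eq_0_iff of_int_eq_1_iff
      le_less not_le int_one_le_iff_zero_less)

theorem lemma5p2:
  fixes R S :: "'a::euclidean_space set" and lam i :: 'a and w :: "'a \<Rightarrow> 'a"
  assumes "root_system R" and "irreducible_rs R" and "is_base R S"
    and "lam \<in> dominant R S" and "i \<in> S" and "w \<in> weyl R"
    and "lam - inv w (fund_wt S i) \<in> dominant R S"
  shows "(\<forall>\<mu>\<in>Pplus2 R S (2 *\<^sub>R lam).
            preceq R S (lam, lam) \<mu> \<longrightarrow> simeq R S \<mu> (lam, lam))
       \<and> (\<forall>\<mu>\<in>Pplus2 R S (2 *\<^sub>R lam - inv w (fund_wt S i)).
            preceq R S (lam, lam - inv w (fund_wt S i)) \<mu> \<longrightarrow>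
            simeq R S \<mu> (lam, lam - inv w (fund_wt S i)))"
proof (intro conjI ballI impI)
  fix \<mu> assume mu: "\<mu> \<in> Pplus2 R S (2 *\<^sub>R lam)" and pr: "preceq R S (lam, lam) \<mu>"
  obtain m1 m2 where m: "\<mu> = (m1, m2)" "m1 + m2 = 2 *\<^sub>R lam"
    using mu unfolding Pplus2_def by auto
  show "simeq R S \<mu> (lam, lam)" unfolding simeq_def
  proof
    fix \<alpha> assume a: "\<alpha> \<in> pos_roots R S"
    have "m2 = 2 *\<^sub>R lam - m1" using m(2) by (simp add: algebra_simps)
    then have e: "cpair m2 \<alpha> = 2 * cpair lam \<alpha> - cpair m1 \<alpha>" by (simp add: cpair_diff cpair_scale)
    have "minpair (lam, lam) \<alpha> \<le> minpair \<mu> \<alpha>" using pr a unfolding preceq_def by auto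
    then show "minpair \<mu> \<alpha> = minpair (lam, lam) \<alpha>" using e m(1)
      unfolding minpair_def by (simp add: min_def split: if_splits)
  qed
next
  define \<omega> where "\<omega> = fund_wt S i"
  define x where "x = inv w \<omega>"
  fix \<mu> assume mu: "\<mu> \<in> Pplus2 R S (2 *\<^sub>R lam - inv w (fund_wt S i))"
    and pr: "preceq R S (lam, lam - inv w (fund_wt S i)) \<mu>"
  have sp: "span S = UNIV" by (rule base_span[OF assms(1,3)])
  have om: "\<forall>j\<in>S. cpair \<omega> j = (if j = i then 1 else 0)"
    unfolding \<omega>_def by (rule fund_wt_prop[OF assms(1,3)])
  have W: "linear w" "\<And>a b. w a \<bullet> w b = a \<bullet> b" "w ` R = R"
    using weyl_props[OF assms(1,6)] by auto
  have inj: "inj w"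
  proof -
    have "\<And>v. w v = 0 \<Longrightarrow> v = 0"
    proof -
      fix v assume "w v = 0"
      then have "v \<bullet> v = 0" using W(2)[of v v] by simp
      then show "v = 0" by simp
    qed
    then show ?thesis using linear_injective_0[OF W(1)] by auto
  qed
  have surj: "surj w" using linear_injective_imp_surjective[OF W(1) inj] by auto
  have wi: "\<And>v. w (inv w v) = v" using surj by (simp add: surj_f_inv_f)
  have iw: "\<And>v. inv w (w v) = v" using inj by (simp add: inv_f_f)
  have cw: "\<And>a b. cpair (w a) (w b) = cpair a b" unfolding cpair_def using W(2) by simp
  obtain m1 m2 where m: "\<mu> = (m1, m2)" "m1 + m2 = 2 *\<^sub>R lam - x"
    "m1 \<in> dominant R S"
    using mu unfolding Pplus2_def x_def \<omega>_def by auto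
  define y where "y = lam - m1"
  have e2: "\<And>\<alpha>. cpair m2 \<alpha> = 2 * cpair lam \<alpha> - cpair x \<alpha> - cpair m1 \<alpha>"
  proof -
    fix \<alpha>
    have "m2 = 2 *\<^sub>R lam - x - m1" using m(2) by (simp add: algebra_simps)
    then show "cpair m2 \<alpha> = 2 * cpair lam \<alpha> - cpair x \<alpha> - cpair m1 \<alpha>"
      by (simp add: cpair_diff cpair_scale)
  qed
  have ey: "\<And>\<alpha>. cpair y \<alpha> = cpair lam \<alpha> - cpair m1 \<alpha>" unfolding y_def by (simp add: cpair_diff)
  have bpos: "min 0 (cpair x \<gamma>) \<le> cpair y \<gamma> \<and> cpair y \<gamma> \<le> max 0 (cpair x \<gamma>)"
    if g: "\<gamma> \<in> pos_roots R S" for \<gamma>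
  proof -
    have "minpair (lam, lam - x) \<gamma> \<le> minpair \<mu> \<gamma>"
      using pr g unfolding preceq_def x_def \<omega>_def by auto
    then have "min (cpair lam \<gamma>) (cpair lam \<gamma> - cpair x \<gamma>) \<le> min (cpair m1 \<gamma>) (cpair m2 \<gamma>)"
      using m(1) unfolding minpair_def by (simp add: cpair_diff)
    then show ?thesis using e2[of \<gamma>] ey[of \<gamma>] by (simp add: min_def max_def split: if_splits)
  qed
  have bnd: "min 0 (cpair x \<gamma>) \<le> cpair y \<gamma> \<and> cpair y \<gamma> \<le> max 0 (cpair x \<gamma>)"
    if g: "\<gamma> \<in> R" for \<gamma>
  proof -
    from pos_or_neg[OF assms(1,3) g] show ?thesis
    proof
      assume "\<gamma> \<in> pos_roots R S" then show ?thesis by (rule bpos)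
    next
      assume "- \<gamma> \<in> pos_roots R S"
      from bpos[OF this] show ?thesis by (simp add: cpair_neg min_def max_def split: if_splits)
    qed
  qed
  have yint: "cpair y \<gamma> \<in> \<int>" if g: "\<gamma> \<in> R" for \<gamma>
  proof -
    have "cpair lam \<gamma> \<in> \<int>" "cpair m1 \<gamma> \<in> \<int>"
      using assms(4) m(3) g unfolding dominant_def weights_def by auto
    then show ?thesis using ey[of \<gamma>] by simp
  qed
  define z where "z = w y"
  have zS: "cpair z \<beta> \<in> \<int> \<and> 0 \<le> cpair z \<beta> \<and> cpair z \<beta> \<le> (if \<beta> = i then 1 else 0)"
    if b: "\<beta> \<in> S" for \<beta>
  proof -
    have "\<beta> \<in> R" using b assms(3) unfolding is_base_def by auto
    then obtain \<gamma> where g: "\<gamma> \<in> R" "\<beta> = w \<gamma>" using W(3) by force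
    have "cpair z \<beta> = cpair y \<gamma>" unfolding z_def g(2) by (rule cw)
    moreover have "cpair x \<gamma> = (if \<beta> = i then 1 else 0)"
      using cw[of x \<gamma>] wi[of \<omega>] om b g(2) unfolding x_def by simp
    ultimately show ?thesis using bnd[OF g(1)] yint[OF g(1)]
      by (simp split: if_splits)
  qed
  define c where "c = cpair z i"
  have c01: "c = 0 \<or> c = 1" using zS[OF assms(5)] Ints_01 unfolding c_def by simp
  have "\<forall>\<beta>\<in>S. cpair (z - c *\<^sub>R \<omega>) \<beta> = 0"
  proof
    fix \<beta> assume b: "\<beta> \<in> S"
    show "cpair (z - c *\<^sub>R \<omega>) \<beta> = 0"
    proof (cases "\<beta> = i")
      case True then show ?thesis using om b by (simp add: cpair_diff cpair_scale c_def)
    next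
      case False then show ?thesis using om b zS[OF b] by (simp add: cpair_diff cpair_scale)
    qed
  qed
  then have zc: "z = c *\<^sub>R \<omega>" using cpair_zero_by_span[OF sp, of "z - c *\<^sub>R \<omega>"] by simp
  have yc: "cpair y \<alpha> = c * cpair x \<alpha>" for \<alpha>
  proof -
    have "cpair y \<alpha> = cpair z (w \<alpha>)" unfolding z_def by (rule cw[symmetric])
    also have "\<dots> = c * cpair (w x) (w \<alpha>)" unfolding zc x_def wi by (rule cpair_scale)
    also have "\<dots> = c * cpair x \<alpha>" by (simp add: cw)
    finally show ?thesis .
  qed
  show "simeq R S \<mu> (lam, lam - inv w (fund_wt S i))" unfolding simeq_def
  proof
    fix \<alpha> assume a: "\<alpha> \<in> pos_roots R S"
    have "cpair m1 \<alpha> = cpair lam \<alpha> - c * cpair x \<alpha>" using ey[of \<alpha>] yc[of \<alpha>] by simp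
    then show "minpair \<mu> \<alpha> = minpair (lam, lam - inv w (fund_wt S i)) \<alpha>"
      using e2[of \<alpha>] m(1) c01 unfolding minpair_def x_def[symmetric] \<omega>_def[symmetric]
      by (auto simp: cpair_diff min_def)
  qed
qed

end
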